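(* Let $A=\{a_1,a_2,\ldots,a_k\}$ be a set of $k\ge1$ distinct positive integers, let $\tau$ be a permutation of $\{1,2,\ldots,k\}$, and let $A_{\tau(j)}=\{a_{\tau(1)},\ldots,a_{\tau(j)}\}$ for $j=1,\ldots,k$, with $A_{\tau(0)}=\emptyset$. Then the following are equivalent: (a) No $2$-element subset of $A$ is relatively prime (i.e. $\gcd(a,b)>1$ for all distinct $a,b\in A$). (b) \[ \sum_{d=1}^{\sup A} \mu(d)\, v(A,d)\,(v(A,d)-1) = 0. \] (c) \[ \sum_{j=1}^k \sum_{d\mid a_{\tau(j)}} \mu(d)\, v(A_{\tau(j-1)},d) = 0. \]
   Context: $\sup A$ is the largest element of $A$. $\mu$ is the Möbius function. For a finite set $X$ of positive integers and a positive integer $d$, $v(X,d)$ is the number of multiples of $d$ in $X$ (so $v(\emptyset,d)=0$). *)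

theory Defs
  imports "HOL-Computational_Algebra.Computational_Algebra"
          "HOL-Combinatorics.Permutations"
begin

definition moebius_mu :: "nat \<Rightarrow> int" where
  "moebius_mu n = (if n = 0 then 0 else if squarefree n then (-1) ^ card (prime_factors n) else 0)"

definition v :: "nat set \<Rightarrow> nat \<Rightarrow> nat" where
  "v X d = card {x \<in> X. d dvd x}"

end

theory Submission
  imports Defs
begin

lemma pf_prod:
  assumes "finite P" "\<forall>p\<in>P. prime (p::nat)"
  shows "prime_factors (\<Prod>P) = P"
proof -
  have "prime_factors (\<Prod>P) = \<Union>((prime_factors \<circ> id) ` P)"
    using assms by (subst prime_factors_prod) auto
  also have "\<dots> = P" using assms by (auto simp: prime_prime_factors)
  finally show ?thesis .
qed

lemma sqf_prod:
  assumes "finite P" "\<forall>p\<in>P. prime (p::nat)"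
  shows "squarefree (\<Prod>P)"
  using assms by (intro squarefree_prod_coprime) (auto simp: primes_coprime squarefree_prime)

lemma sqf_pos: "squarefree (d::nat) \<Longrightarrow> 0 < d"
  using not_squarefree_0 by (metis gr0I)

lemma sqf_eq_prod:
  assumes "squarefree (d::nat)"
  shows "d = \<Prod>(prime_factors d)"
proof -
  have "d \<noteq> 0" using sqf_pos[OF assms] by simp
  hence "0 < d" by simp
  hence "d = (\<Prod>p \<in> prime_factors d. p ^ multiplicity p d)"
    by (rule prime_factorization_nat)
  also have "\<dots> = \<Prod>(prime_factors d)"
    using squarefree_factorial_semiring'[OF \<open>d\<noteq>0\<close>] assms by (intro prod.cong) auto
  finally show ?thesis .
qed

lemma mu_sum:
  assumes "n > (0::nat)"
  shows "(\<Sum>d | d dvd n. moebius_mu d) = (if n = 1 then 1 else 0)"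
proof -
  have fin: "finite {d. d dvd n}" using assms by simp
  have "(\<Sum>d | d dvd n. moebius_mu d) = (\<Sum>d | d dvd n \<and> squarefree d. moebius_mu d)"
    using fin by (intro sum.mono_neutral_right) (auto simp: moebius_mu_def)
  also have "\<dots> = (\<Sum>P\<in>Pow (prime_factors n). moebius_mu (\<Prod>P))"
  proof (rule sum.reindex_bij_betw[symmetric])
    show "bij_betw (\<lambda>P. \<Prod>P) (Pow (prime_factors n)) {d. d dvd n \<and> squarefree d}"
    proof (rule bij_betw_byWitness[where f' = prime_factors])
      show "\<forall>P\<in>Pow (prime_factors n). prime_factors (\<Prod>P) = P"
        by (auto intro!: pf_prod dest: finite_subset in_prime_factors_imp_prime)
      show "\<forall>d\<in>{d. d dvd n \<and> squarefree d}. \<Prod>(prime_factors d) = d"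
        using sqf_eq_prod by auto
      show "(\<lambda>P. \<Prod>P) ` Pow (prime_factors n) \<subseteq> {d. d dvd n \<and> squarefree d}"
      proof
        fix d assume "d \<in> (\<lambda>P. \<Prod>P) ` Pow (prime_factors n)"
        then obtain P where P: "P \<subseteq> prime_factors n" "d = \<Prod>P" by auto
        have fP: "finite P" using P finite_subset by blast
        have pr: "\<forall>p\<in>P. prime p" using P in_prime_factors_imp_prime by blast
        have "\<Prod>P dvd \<Prod>(prime_factors n)" using P(1) by (intro prod_dvd_prod_subset) auto
        moreover have "\<Prod>(prime_factors n) dvd n"
        proof -
          have "\<Prod>(prime_factors n) dvd (\<Prod>p\<in>prime_factors n. p ^ multiplicity p n)"
            by (intro prod_dvd_prod) (auto simp: prime_factors_multiplicity intro!: dvd_power)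
          also have "\<dots> = n" using prime_factorization_nat[OF assms] by simp
          finally show ?thesis .
        qed
        ultimately show "d \<in> {d. d dvd n \<and> squarefree d}" using P sqf_prod[OF fP pr] dvd_trans by auto
      qed
      show "prime_factors ` {d. d dvd n \<and> squarefree d} \<subseteq> Pow (prime_factors n)"
        using assms by (auto simp: in_prime_factors_iff intro: dvd_trans)
    qed
  qed
  also have "\<dots> = (\<Sum>P\<in>Pow (prime_factors n). (-1) ^ card P * (\<Prod>x\<in>P. 1) * (\<Prod>x\<in>prime_factors n - P. 1))"
  proof (intro sum.cong refl)
    fix P assume P: "P \<in> Pow (prime_factors n)"
    have fP: "finite P" using P finite_subset by blast
    have pr: "\<forall>p\<in>P. prime p" using P in_prime_factors_imp_prime by blast
    show "moebius_mu (\<Prod>P) = (-1) ^ card P * (\<Prod>x\<in>P. 1) * (\<Prod>x\<in>prime_factors n - P. 1)"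
      using sqf_prod[OF fP pr] pf_prod[OF fP pr] sqf_pos[OF sqf_prod[OF fP pr]] by (simp add: moebius_mu_def)
  qed
  also have "\<dots> = (\<Prod>x\<in>prime_factors n. 1 - 1)"
    by (rule prod_diff_conv_sum[symmetric]) simp
  also have "\<dots> = (if n = 1 then 1 else 0)"
  proof (cases "n = 1")
    case False
    then obtain p where "prime p" "p dvd n" using prime_factor_nat by blast
    hence "p \<in> prime_factors n" using assms by (auto simp: in_prime_factors_iff)
    then show ?thesis using False by (simp add: card_gt_0_iff) (metis empty_iff set_mset_empty)
  qed simp
  finally show ?thesis .
qed


lemma mu_coprime_sum:
  assumes "finite B" "\<forall>x\<in>B. x > 0" "y > (0::nat)"
  shows "(\<Sum>d | d dvd y. moebius_mu d * int (v B d)) = int (card {x\<in>B. coprime x y})"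
proof -
  have fy: "finite {d. d dvd y}" using assms by simp
  have "(\<Sum>d | d dvd y. moebius_mu d * int (v B d))
      = (\<Sum>d | d dvd y. \<Sum>x\<in>B. if d dvd x then moebius_mu d else 0)"
  proof (intro sum.cong refl)
    fix d
    have "int (v B d) = (\<Sum>x\<in>B. if d dvd x then 1 else 0)"
      using assms(1) by (simp add: v_def sum.If_cases Int_def)
    then show "moebius_mu d * int (v B d) = (\<Sum>x\<in>B. if d dvd x then moebius_mu d else 0)"
      by (simp add: sum_distrib_left if_distrib cong: if_cong)
  qed
  also have "\<dots> = (\<Sum>x\<in>B. \<Sum>d | d dvd y. if d dvd x then moebius_mu d else 0)"
    by (rule sum.swap)
  also have "\<dots> = (\<Sum>x\<in>B. if coprime x y then 1 else 0)"
  proof (intro sum.cong refl)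
    fix x assume x: "x \<in> B"
    have "(\<Sum>d | d dvd y. if d dvd x then moebius_mu d else 0) = (\<Sum>d | d dvd gcd x y. moebius_mu d)"
      using fy by (subst sum.inter_filter[symmetric]) (auto intro!: sum.cong)
    also have "\<dots> = (if gcd x y = 1 then 1 else 0)"
      using assms x by (intro mu_sum) auto
    finally show "(\<Sum>d | d dvd y. if d dvd x then moebius_mu d else 0) = (if coprime x y then 1 else 0)"
      by (simp add: coprime_iff_gcd_eq_1)
  qed
  also have "\<dots> = int (card {x\<in>B. coprime x y})"
    using assms(1) by (simp add: sum.If_cases Int_def)
  finally show ?thesis .
qed

lemma mu_coprime_sum2:
  assumes "finite B" "\<forall>x\<in>B. x > 0" "y > (0::nat)" "y \<le> M"
  shows "(\<Sum>d = 1..M. if d dvd y then moebius_mu d * int (v B d) else 0) = int (card {x\<in>B. coprime x y})"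
proof -
  have "(\<Sum>d = 1..M. if d dvd y then moebius_mu d * int (v B d) else 0)
     = (\<Sum>d | d dvd y. moebius_mu d * int (v B d))"
  proof -
    have "(\<Sum>d = 1..M. if d dvd y then moebius_mu d * int (v B d) else 0)
       = (\<Sum>d \<in> {1..M} \<inter> {d. d dvd y}. moebius_mu d * int (v B d))"
      by (simp add: sum.inter_restrict)
    also have "{1..M} \<inter> {d. d dvd y} = {d. d dvd y}"
    proof -
      have "x\<in>{1..M}" if "x dvd y" for x
      proof -
        have "0<x" using dvd_pos_nat assms(3) that by blast
        moreover have "x \<le> y" using dvd_imp_le assms(3) that by blast
        ultimately show ?thesis using assms(4) by auto
      qed
      thus ?thesis by auto
    qed
    finally show ?thesis .
  qed
  also have "\<dots> = int (card {x\<in>B. coprime x y})" by (rule mu_coprime_sum[OF assms(1-3)])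
  finally show ?thesis .
qed

lemma vv_sum:
  assumes "finite A"
  shows "int (v A d) * (int (v A d) - 1) = (\<Sum>y\<in>A. if d dvd y then int (v (A - {y}) d) else 0)"
proof -
  define C where "C = {x\<in>A. d dvd x}"
  have fC: "finite C" using assms by (simp add: C_def)
  have "(\<Sum>y\<in>A. if d dvd y then int (v (A - {y}) d) else 0) = (\<Sum>y\<in>C. int (v (A - {y}) d))"
    by (simp add: sum.inter_filter[symmetric] assms C_def)
  also have "\<dots> = (\<Sum>y\<in>C. int (card C) - 1)"
  proof (intro sum.cong refl)
    fix y assume y: "y \<in> C"
    have "{x \<in> A - {y}. d dvd x} = C - {y}" by (auto simp: C_def)
    hence "v (A - {y}) d = card C - 1" using y fC by (simp add: v_def)
    moreover have "card C \<ge> 1" using y fC by (metis One_nat_def Suc_leI card_gt_0_iff empty_iff)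
    ultimately show "int (v (A - {y}) d) = int (card C) - 1" by simp
  qed
  also have "\<dots> = int (v A d) * (int (v A d) - 1)" by (simp add: v_def C_def)
  finally show ?thesis by simp
qed

theorem theorem5p7:
  fixes k :: nat and a :: "nat \<Rightarrow> nat" and \<tau> :: "nat \<Rightarrow> nat"
  assumes "k \<ge> 1"
    and "inj_on a {1..k}"
    and "\<forall>i\<in>{1..k}. a i > 0"
    and "\<tau> permutes {1..k}"
  defines "A \<equiv> a ` {1..k}"
    and "At \<equiv> (\<lambda>j. a ` \<tau> ` {1..j})"
  shows "((\<forall>x\<in>A. \<forall>y\<in>A. x \<noteq> y \<longrightarrow> gcd x y > 1)
            \<longleftrightarrow> (\<Sum>d = 1..Max A. moebius_mu d * int (v A d) * (int (v A d) - 1)) = 0)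
       \<and> ((\<forall>x\<in>A. \<forall>y\<in>A. x \<noteq> y \<longrightarrow> gcd x y > 1)
            \<longleftrightarrow> (\<Sum>j = 1..k. \<Sum>d | d dvd a (\<tau> j). moebius_mu d * int (v (At (j - 1)) d)) = 0)"
proof -
  have fA: "finite A" by (simp add: A_def)
  have posA: "\<forall>x\<in>A. x > 0" using assms(3) by (auto simp: A_def)
  define Q where "Q = (\<forall>x\<in>A. \<forall>y\<in>A. x \<noteq> y \<longrightarrow> \<not> coprime x y)"
  have PQ: "(\<forall>x\<in>A. \<forall>y\<in>A. x \<noteq> y \<longrightarrow> gcd x y > 1) \<longleftrightarrow> Q"
  proof -
    have "gcd x y > 1 \<longleftrightarrow> \<not> coprime x y" if "x \<in> A" "y \<in> A" for x y
    proof -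
      have "gcd x y > 0" using posA that by simp
      thus ?thesis unfolding coprime_iff_gcd_eq_1 by linarith
    qed
    thus ?thesis unfolding Q_def by blast
  qed
  have part1: "(\<Sum>d = 1..Max A. moebius_mu d * int (v A d) * (int (v A d) - 1)) = 0 \<longleftrightarrow> Q"
  proof -
    have "(\<Sum>d = 1..Max A. moebius_mu d * int (v A d) * (int (v A d) - 1))
        = (\<Sum>d = 1..Max A. \<Sum>y\<in>A. if d dvd y then moebius_mu d * int (v (A - {y}) d) else 0)"
      by (intro sum.cong refl) (simp add: mult.assoc vv_sum[OF fA] sum_distrib_left if_distrib cong: if_cong)
    also have "\<dots> = (\<Sum>y\<in>A. \<Sum>d = 1..Max A. if d dvd y then moebius_mu d * int (v (A - {y}) d) else 0)"
      by (rule sum.swap)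
    also have "\<dots> = (\<Sum>y\<in>A. int (card {x\<in>A - {y}. coprime x y}))"
      using fA posA by (intro sum.cong refl mu_coprime_sum2) auto
    finally have eq: "(\<Sum>d = 1..Max A. moebius_mu d * int (v A d) * (int (v A d) - 1))
       = (\<Sum>y\<in>A. int (card {x\<in>A - {y}. coprime x y}))" .
    have "(\<Sum>y\<in>A. int (card {x\<in>A - {y}. coprime x y})) = 0 \<longleftrightarrow> (\<forall>y\<in>A. card {x\<in>A - {y}. coprime x y} = 0)"
      using fA by (subst sum_nonneg_eq_0_iff) auto
    also have "\<dots> \<longleftrightarrow> Q" using fA unfolding Q_def by auto
    finally show ?thesis using eq by simp
  qed
  have tau_img: "\<tau> ` {1..k} = {1..k}" using assms(4) by (rule permutes_image)
  have tau_inj: "inj_on \<tau> {1..k}" using assms(4) by (meson permutes_inj inj_on_subset subset_UNIV)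
  have tau_in: "\<tau> i \<in> {1..k}" if "i \<in> {1..k}" for i using tau_img that by blast
  have part2: "(\<Sum>j = 1..k. \<Sum>d | d dvd a (\<tau> j). moebius_mu d * int (v (At (j - 1)) d)) = 0 \<longleftrightarrow> Q"
  proof -
    have "(\<Sum>j = 1..k. \<Sum>d | d dvd a (\<tau> j). moebius_mu d * int (v (At (j - 1)) d))
       = (\<Sum>j = 1..k. int (card {x\<in>At (j - 1). coprime x (a (\<tau> j))}))"
    proof (intro sum.cong refl mu_coprime_sum)
      fix j assume "j \<in> {1..k}"
      then show "finite (At (j - 1))" "\<forall>x\<in>At (j - 1). x > 0" "a (\<tau> j) > 0"
        using assms(3) tau_in by (auto simp: At_def)
    qed
    also have "\<dots> = 0 \<longleftrightarrow> (\<forall>j\<in>{1..k}. card {x\<in>At (j - 1). coprime x (a (\<tau> j))} = 0)"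
      by (subst sum_nonneg_eq_0_iff) auto
    also have "\<dots> \<longleftrightarrow> (\<forall>j\<in>{1..k}. \<forall>x\<in>At (j - 1). \<not> coprime x (a (\<tau> j)))"
      by (auto simp: At_def)
    also have "\<dots> \<longleftrightarrow> Q"
    proof
      assume H: "\<forall>j\<in>{1..k}. \<forall>x\<in>At (j - 1). \<not> coprime x (a (\<tau> j))"
      show Q unfolding Q_def
      proof (intro ballI impI)
        fix x y assume xy: "x \<in> A" "y \<in> A" "x \<noteq> y"
        obtain i where i: "i \<in> {1..k}" "x = a (\<tau> i)" using xy(1) tau_img unfolding A_def
          by (metis image_iff)
        obtain j where j: "j \<in> {1..k}" "y = a (\<tau> j)" using xy(2) tau_img unfolding A_def
          by (metis image_iff)
        have "i \<noteq> j" using i j xy by auto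
        show "\<not> coprime x y"
        proof (cases "i < j")
          case True
          hence "x \<in> At (j - 1)" using i by (auto simp: At_def)
          thus ?thesis using H j by auto
        next
          case False
          hence "y \<in> At (i - 1)" using j \<open>i \<noteq> j\<close> by (auto simp: At_def)
          thus ?thesis using H i by (auto simp: coprime_commute)
        qed
      qed
    next
      assume q: Q
      show "\<forall>j\<in>{1..k}. \<forall>x\<in>At (j - 1). \<not> coprime x (a (\<tau> j))"
      proof (intro ballI)
        fix j x assume j: "j \<in> {1..k}" and x: "x \<in> At (j - 1)"
        then obtain i where i: "i \<in> {1..j-1}" "x = a (\<tau> i)" by (auto simp: At_def)
        have ik: "i \<in> {1..k}" using i j by auto
        have "i \<noteq> j" using i j by auto
        hence "\<tau> i \<noteq> \<tau> j" using tau_inj ik j inj_on_eq_iff by metis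
        hence "x \<noteq> a (\<tau> j)" using assms(2) i(2) tau_in[OF ik] tau_in[OF j] inj_on_eq_iff by metis
        moreover have "x \<in> A" "a (\<tau> j) \<in> A" using i ik j tau_in by (auto simp: A_def)
        ultimately show "\<not> coprime x (a (\<tau> j))" using q unfolding Q_def by blast
      qed
    qed
    finally show ?thesis .
  qed
  show ?thesis using PQ part1 part2 by blast
qed

end
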